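(* Let $M$ and $M'$ be matroids on ground sets $E,E'$ with $E\cap E'=\{p\}$, where $p$ is a coloop of neither $M$ nor $M'$. Then $f(\operatorname{Ser}(M,M'))\le f(M)+f(M')$. Moreover, if $M$ has two disjoint bases neither of which contains $p$, then $f(\operatorname{Ser}(M,M'))\le\min\bigl(f(M),f(M')\bigr)$.
   Context: The series connection $\operatorname{Ser}(M,M')$ is the matroid on $E\cup E'$ whose bases are the sets $B\cup B'$ with $B$ a basis of $M$, $B'$ a basis of $M'$, and $B\cap B'=\varnothing$. For a matroid $M$, $\mathcal{B}(M)$ denotes its set of bases, and the distance between two bases $B,B'$ is $|B\triangle B'|$; $\operatorname{diam}$ denotes diameter. The Borsuk number $f(M)$ is the minimum number of parts in a partition of $\mathcal{B}(M)$ in which every part has diameter strictly smaller than $\operatorname{diam}(\mathcal{B}(M))$; if $M$ has exactly one basis, $f(M):=+\infty$. *)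

theory Defs
  imports Main "HOL-Library.Extended_Nat"
begin

definition matroid_bases :: "'a set \<Rightarrow> 'a set set \<Rightarrow> bool" where
  "matroid_bases E \<B> \<longleftrightarrow> finite E \<and> \<B> \<noteq> {} \<and> (\<forall>B\<in>\<B>. B \<subseteq> E) \<and>
     (\<forall>B1\<in>\<B>. \<forall>B2\<in>\<B>. \<forall>x\<in>B1 - B2. \<exists>y\<in>B2 - B1. insert y (B1 - {x}) \<in> \<B>)"

definition coloop :: "'a set set \<Rightarrow> 'a \<Rightarrow> bool" where
  "coloop \<B> p \<longleftrightarrow> (\<forall>B\<in>\<B>. p \<in> B)"

definition ser_bases :: "'a set set \<Rightarrow> 'a set set \<Rightarrow> 'a set set" where
  "ser_bases \<B> \<B>' = {B \<union> B' | B B'. B \<in> \<B> \<and> B' \<in> \<B>' \<and> B \<inter> B' = {}}"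

definition basis_dist :: "'a set \<Rightarrow> 'a set \<Rightarrow> nat" where
  "basis_dist B B' = card ((B - B') \<union> (B' - B))"

definition diam :: "'a set set \<Rightarrow> nat" where
  "diam \<B> = Max {basis_dist B B' | B B'. B \<in> \<B> \<and> B' \<in> \<B>}"

definition borsuk_partition :: "'a set set \<Rightarrow> 'a set set set \<Rightarrow> bool" where
  "borsuk_partition \<B> P \<longleftrightarrow> finite P \<and> \<Union>P = \<B> \<and> {} \<notin> P \<and>
     (\<forall>X\<in>P. \<forall>Y\<in>P. X \<noteq> Y \<longrightarrow> X \<inter> Y = {}) \<and> (\<forall>X\<in>P. diam X < diam \<B>)"

definition borsuk :: "'a set set \<Rightarrow> enat" where
  "borsuk \<B> = (if card \<B> = 1 then \<infinity>
     else (INF P \<in> {P. borsuk_partition \<B> P}. enat (card P)))"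

end

theory Submission
  imports Defs
begin

lemma diam_set_eq: "{basis_dist B B' | B B'. B \<in> X \<and> B' \<in> X} = (\<lambda>(B,B'). basis_dist B B') ` (X \<times> X)"
  by auto

lemma diam_ge: "finite X \<Longrightarrow> A \<in> X \<Longrightarrow> B \<in> X \<Longrightarrow> basis_dist A B \<le> diam X"
  unfolding diam_def diam_set_eq by (rule Max_ge) auto

lemma diam_ex: "finite X \<Longrightarrow> X \<noteq> {} \<Longrightarrow> \<exists>A\<in>X. \<exists>B\<in>X. basis_dist A B = diam X"
proof -
  assume "finite X" "X \<noteq> {}"
  then have "diam X \<in> (\<lambda>(B,B'). basis_dist B B') ` (X \<times> X)"
    unfolding diam_def diam_set_eq by (intro Max_in) auto
  then obtain a b where "a \<in> X" "b \<in> X" "diam X = basis_dist a b" by auto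
  then show ?thesis by metis
qed

lemma diam_lt: "finite X \<Longrightarrow> X \<noteq> {} \<Longrightarrow> (\<And>A B. A \<in> X \<Longrightarrow> B \<in> X \<Longrightarrow> basis_dist A B < d) \<Longrightarrow> diam X < d"
proof -
  assume a: "finite X" "X \<noteq> {}" "\<And>A B. A \<in> X \<Longrightarrow> B \<in> X \<Longrightarrow> basis_dist A B < d"
  obtain A B where "A \<in> X" "B \<in> X" "basis_dist A B = diam X" using diam_ex[OF a(1,2)] by blast
  then show ?thesis using a(3) by force
qed

lemma basis_dist_sym: "basis_dist A B = basis_dist B A"
  unfolding basis_dist_def by (simp add: Un_commute)

lemma basis_dist_eq: assumes "finite A" "finite B" "card A = card B"
  shows "basis_dist A B = 2 * card (A - B)"
proof -
  have "card (A - B) = card A - card (A \<inter> B)" using assms by (simp add: card_Diff_subset_Int)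
  moreover have "card (B - A) = card B - card (A \<inter> B)" using assms
    by (metis Int_commute card_Diff_subset_Int finite_Int)
  moreover have "card ((A - B) \<union> (B - A)) = card (A - B) + card (B - A)"
    using assms by (intro card_Un_disjoint) auto
  ultimately show ?thesis unfolding basis_dist_def using assms by simp
qed

locale matroid =
  fixes E :: "'a set" and \<B> :: "'a set set"
  assumes mb: "matroid_bases E \<B>"
begin

lemma finE: "finite E" using mb unfolding matroid_bases_def by auto
lemma sub: "B \<in> \<B> \<Longrightarrow> B \<subseteq> E" using mb unfolding matroid_bases_def by auto
lemma finB: "B \<in> \<B> \<Longrightarrow> finite B" using sub finE finite_subset by blast
lemma fin: "finite \<B>"
proof -
  have "\<B> \<subseteq> Pow E" using sub by auto
  then show ?thesis using finE finite_subset by blast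
qed
lemma ne: "\<B> \<noteq> {}" using mb unfolding matroid_bases_def by auto
lemma exch: "B1 \<in> \<B> \<Longrightarrow> B2 \<in> \<B> \<Longrightarrow> x \<in> B1 - B2 \<Longrightarrow> \<exists>y\<in>B2 - B1. insert y (B1 - {x}) \<in> \<B>"
  using mb unfolding matroid_bases_def by blast

lemma card_le: "B1 \<in> \<B> \<Longrightarrow> B2 \<in> \<B> \<Longrightarrow> card B1 \<le> card B2"
proof (induction "card (B1 - B2)" arbitrary: B1 rule: less_induct)
  case less
  show ?case
  proof (cases "B1 - B2 = {}")
    case True
    then show ?thesis using finB[OF less.prems(2)] by (simp add: card_mono)
  next
    case False
    then obtain x where x: "x \<in> B1 - B2" by auto
    then obtain y where y: "y \<in> B2 - B1" and B3: "insert y (B1 - {x}) \<in> \<B>"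
      using exch less.prems by blast
    have f1: "finite B1" using finB less.prems by auto
    have c3: "card (insert y (B1 - {x})) = card B1"
    proof -
      have "card B1 > 0" using f1 x by (auto simp: card_gt_0_iff)
      then show ?thesis using f1 x y by (simp add: card_Diff_singleton)
    qed
    have eq: "insert y (B1 - {x}) - B2 = (B1 - B2) - {x}" using y x by auto
    have "card ((B1 - B2) - {x}) < card (B1 - B2)" using x f1 by (intro card_Diff1_less) auto
    then have "card (insert y (B1 - {x}) - B2) < card (B1 - B2)" using eq by simp
    then have "card (insert y (B1 - {x})) \<le> card B2"
      using less.hyps B3 less.prems(2) by blast
    then show ?thesis using c3 by simp
  qed
qed

lemma card_eq: "B1 \<in> \<B> \<Longrightarrow> B2 \<in> \<B> \<Longrightarrow> card B1 = card B2"
  by (intro le_antisym card_le)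

lemma bd: "B1 \<in> \<B> \<Longrightarrow> B2 \<in> \<B> \<Longrightarrow> basis_dist B1 B2 = 2 * card (B1 - B2)"
  by (intro basis_dist_eq finB card_eq)

lemma dge: "B1 \<in> \<B> \<Longrightarrow> B2 \<in> \<B> \<Longrightarrow> basis_dist B1 B2 \<le> diam \<B>"
  by (intro diam_ge fin)

lemma diam_even: "\<exists>k. diam \<B> = 2 * k"
proof -
  obtain A B where "A \<in> \<B>" "B \<in> \<B>" "basis_dist A B = diam \<B>" using diam_ex[OF fin ne] by blast
  then have "diam \<B> = 2 * card (A - B)" using bd by simp
  then show ?thesis by blast
qed

lemma exists_diam_avoid:
  assumes "\<not> coloop \<B> p"
  shows "\<exists>B1\<in>\<B>. \<exists>B2\<in>\<B>. basis_dist B1 B2 = diam \<B> \<and> p \<notin> B2"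
proof -
  obtain A B where AB: "A \<in> \<B>" "B \<in> \<B>" "basis_dist A B = diam \<B>"
    using diam_ex[OF fin ne] by blast
  obtain B3 where B3: "B3 \<in> \<B>" "p \<notin> B3" using assms unfolding coloop_def by blast
  show ?thesis
  proof (cases "p \<in> A \<and> p \<in> B")
    case False
    show ?thesis
    proof (cases "p \<in> A")
      case False then show ?thesis using AB basis_dist_sym[of A B] by (intro bexI[where x=B] bexI[where x=A]) auto
    next
      case True then have "p \<notin> B" using \<open>\<not> (p \<in> A \<and> p \<in> B)\<close> by blast
      then show ?thesis using AB by (intro bexI[where x=A] bexI[where x=B]) auto
    qed
  next
    case True
    then have "p \<in> B - B3" using B3 by auto
    then obtain y where y: "y \<in> B3 - B" and B4: "insert y (B - {p}) \<in> \<B>"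
      using exch[OF AB(2) B3(1)] by blast
    have "B - A \<subseteq> insert y (B - {p}) - A" using True by auto
    then have "card (B - A) \<le> card (insert y (B - {p}) - A)"
      using finB[OF B4] by (intro card_mono) auto
    then have "basis_dist B A \<le> basis_dist (insert y (B - {p})) A"
      using bd AB B4 by simp
    then have "basis_dist A (insert y (B - {p})) = diam \<B>"
      using AB dge[OF B4 AB(1)] basis_dist_sym[of A B] basis_dist_sym[of A "insert y (B - {p})"] by linarith
    moreover have "p \<notin> insert y (B - {p})" using y B3 by auto
    ultimately show ?thesis using AB B4 by blast
  qed
qed

end

lemma borsuk_le:
  assumes "finite S" "finite Q" "\<Union>Q = S" "{} \<notin> Q" "\<forall>X\<in>Q. \<forall>Y\<in>Q. X \<noteq> Y \<longrightarrow> X \<inter> Y = {}"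
    "\<forall>X\<in>Q. \<forall>A\<in>X. \<forall>B\<in>X. basis_dist A B < diam S"
  shows "borsuk S \<le> enat (card Q)"
proof -
  have "\<forall>X\<in>Q. diam X < diam S"
  proof
    fix X assume X: "X \<in> Q"
    then have "X \<subseteq> S" "X \<noteq> {}" using assms by auto
    then have "finite X" using assms(1) finite_subset by blast
    then show "diam X < diam S" using diam_lt[of X "diam S"] X assms(6) \<open>X \<noteq> {}\<close> by blast
  qed
  then have bp: "borsuk_partition S Q" unfolding borsuk_partition_def using assms by blast
  have "card S \<noteq> 1"
  proof
    assume "card S = 1"
    then obtain C where C: "S = {C}" by (rule card_1_singletonE)
    then obtain X where X: "X \<in> Q" using assms(3) by auto
    then obtain A where A: "A \<in> X" using assms(4) by (metis all_not_in_conv)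
    then have "A = C" using X assms(3) C by auto
    then have "basis_dist C C < diam S" using assms(6) X A by blast
    moreover obtain U V where "U \<in> S" "V \<in> S" "basis_dist U V = diam S"
      using diam_ex[of S] assms(1) C by blast
    ultimately show False using C by (simp add: basis_dist_def)
  qed
  then have "borsuk S = (INF P\<in>{P. borsuk_partition S P}. enat (card P))" by (simp add: borsuk_def)
  also have "\<dots> \<le> enat (card Q)" by (rule INF_lower) (simp add: bp)
  finally show ?thesis .
qed

lemma borsuk_obtain:
  assumes "borsuk \<B> \<noteq> \<infinity>"
  shows "\<exists>P. borsuk_partition \<B> P \<and> borsuk \<B> = enat (card P)"
proof -
  let ?A = "(\<lambda>P. enat (card P)) ` {P. borsuk_partition \<B> P}"
  have c: "card \<B> \<noteq> 1" using assms unfolding borsuk_def by auto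
  then have b: "borsuk \<B> = Inf ?A" unfolding borsuk_def by simp
  have "?A \<noteq> {}"
  proof
    assume "?A = {}"
    then have "Inf ?A = \<infinity>" by (simp add: Inf_enat_def)
    then show False using b assms by simp
  qed
  have e: "Inf ?A = (if ?A = {} then \<infinity> else LEAST x. x \<in> ?A)" by (rule Inf_enat_def)
  have "Inf ?A = (LEAST x. x \<in> ?A)" by (simp only: e if_not_P[OF \<open>?A \<noteq> {}\<close>])
  moreover have "(LEAST x. x \<in> ?A) \<in> ?A" using \<open>?A \<noteq> {}\<close> by (metis LeastI ex_in_conv)
  ultimately show ?thesis using b by auto
qed

lemma class_part:
  assumes "finite P" "\<forall>X\<in>P. \<forall>Y\<in>P. X \<noteq> Y \<longrightarrow> X \<inter> Y = {}" "\<forall>C\<in>T. \<phi> C \<in> \<Union>P"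
    and Q: "Q = (\<lambda>X. {C\<in>T. \<phi> C \<in> X}) ` P - {{}}"
  shows "finite Q" "\<Union>Q = T" "{} \<notin> Q" "\<forall>X\<in>Q. \<forall>Y\<in>Q. X \<noteq> Y \<longrightarrow> X \<inter> Y = {}"
    "card Q \<le> card P" "\<forall>Z\<in>Q. \<exists>X\<in>P. \<forall>C\<in>Z. C \<in> T \<and> \<phi> C \<in> X"
proof -
  show "finite Q" using assms by simp
  show "\<Union>Q = T"
  proof
    show "\<Union>Q \<subseteq> T" using Q by auto
    show "T \<subseteq> \<Union>Q"
    proof
      fix x assume x: "x \<in> T"
      then obtain X where X: "X \<in> P" "\<phi> x \<in> X" using assms(3) by blast
      then have "x \<in> {C\<in>T. \<phi> C \<in> X}" using x by simp
      moreover have "{C\<in>T. \<phi> C \<in> X} \<noteq> {}" using x X by blast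
      then have "{C\<in>T. \<phi> C \<in> X} \<in> Q" unfolding Q using X(1) by blast
      ultimately show "x \<in> \<Union>Q" by blast
    qed
  qed
  show "{} \<notin> Q" using Q by simp
  show "\<forall>X\<in>Q. \<forall>Y\<in>Q. X \<noteq> Y \<longrightarrow> X \<inter> Y = {}"
  proof (intro ballI impI)
    fix X Y assume XY: "X \<in> Q" "Y \<in> Q" "X \<noteq> Y"
    then obtain X0 Y0 where XY0: "X0 \<in> P" "Y0 \<in> P" "X = {C\<in>T. \<phi> C \<in> X0}" "Y = {C\<in>T. \<phi> C \<in> Y0}"
      unfolding Q by blast
    then have "X0 \<noteq> Y0" using XY(3) by blast
    then have "X0 \<inter> Y0 = {}" using assms(2) XY0 by blast
    then show "X \<inter> Y = {}" using XY0 by blast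
  qed
  have "card Q \<le> card ((\<lambda>X. {C\<in>T. \<phi> C \<in> X}) ` P)"
    by (rule card_mono) (use assms(1) in simp, unfold Q, blast)
  also have "\<dots> \<le> card P" using assms(1) by (rule card_image_le)
  finally show "card Q \<le> card P" .
  show "\<forall>Z\<in>Q. \<exists>X\<in>P. \<forall>C\<in>Z. C \<in> T \<and> \<phi> C \<in> X"
  proof
    fix Z assume "Z \<in> Q"
    then obtain X0 where "X0 \<in> P" "Z = {C\<in>T. \<phi> C \<in> X0}" unfolding Q by blast
    then show "\<exists>X\<in>P. \<forall>C\<in>Z. C \<in> T \<and> \<phi> C \<in> X" by blast
  qed
qed

lemma ser_sub: "ser_bases A B \<subseteq> ser_bases B A"
proof
  fix x assume "x \<in> ser_bases A B"
  then obtain U V where UV: "x = U \<union> V" "U \<in> A" "V \<in> B" "U \<inter> V = {}" unfolding ser_bases_def by blast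
  then have "x = V \<union> U" "V \<inter> U = {}" by auto
  then show "x \<in> ser_bases B A" unfolding ser_bases_def using UV by blast
qed

lemma ser_comm: "ser_bases A B = ser_bases B A"
  by (rule subset_antisym) (rule ser_sub)+

definition dec :: "'a set set \<Rightarrow> 'a set set \<Rightarrow> 'a set \<Rightarrow> 'a set \<times> 'a set" where
  "dec A A' C = (SOME x. fst x \<in> A \<and> snd x \<in> A' \<and> fst x \<inter> snd x = {} \<and> C = fst x \<union> snd x)"

lemma dec: assumes "C \<in> ser_bases A A'"
  shows "fst (dec A A' C) \<in> A \<and> snd (dec A A' C) \<in> A' \<and> fst (dec A A' C) \<inter> snd (dec A A' C) = {}
     \<and> C = fst (dec A A' C) \<union> snd (dec A A' C)"
proof -
  obtain B B' where "B \<in> A" "B' \<in> A'" "B \<inter> B' = {}" "C = B \<union> B'" using assms unfolding ser_bases_def by blast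
  then have "\<exists>x. fst x \<in> A \<and> snd x \<in> A' \<and> fst x \<inter> snd x = {} \<and> C = fst x \<union> snd x"
    by (intro exI[of _ "(B,B')"]) auto
  then show ?thesis unfolding dec_def by (rule someI_ex)
qed

definition avoid :: "'a set set \<Rightarrow> 'a \<Rightarrow> bool" where
  "avoid A p \<longleftrightarrow> (\<exists>B1\<in>A. \<exists>B2\<in>A. p \<notin> B1 \<and> p \<notin> B2 \<and> basis_dist B1 B2 = diam A)"


locale ser = M: matroid E \<B> + M': matroid E' \<B>' for E \<B> E' \<B>' +
  fixes p :: 'a
  assumes EE: "E \<inter> E' = {p}" and ncM: "\<not> coloop \<B> p" and ncM': "\<not> coloop \<B>' p"
begin

abbreviation "S \<equiv> ser_bases \<B> \<B>'"

lemma memS: "B \<in> \<B> \<Longrightarrow> B' \<in> \<B>' \<Longrightarrow> B \<inter> B' = {} \<Longrightarrow> B \<union> B' \<in> S"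
  unfolding ser_bases_def by blast

lemma pEE: "x \<in> E \<Longrightarrow> x \<in> E' \<Longrightarrow> x = p"
  using EE by blast

lemma disj_of: assumes "B \<in> \<B>" "B' \<in> \<B>'" "p \<notin> B \<or> p \<notin> B'" shows "B \<inter> B' = {}"
proof -
  have "B \<subseteq> E" "B' \<subseteq> E'" using assms M.sub M'.sub by auto
  then show ?thesis using pEE assms(3) by blast
qed

lemma S_fin: "finite S"
proof -
  have "S \<subseteq> Pow (E \<union> E')" unfolding ser_bases_def using M.sub M'.sub by blast
  then show ?thesis using M.finE M'.finE finite_subset by blast
qed

lemma S_ne: "S \<noteq> {}"
proof -
  obtain B where "B \<in> \<B>" "p \<notin> B" using ncM unfolding coloop_def by blast
  moreover obtain B' where "B' \<in> \<B>'" "p \<notin> B'" using ncM' unfolding coloop_def by blast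
  ultimately have "B \<union> B' \<in> S" using memS disj_of by blast
  then show ?thesis by blast
qed

lemma S_card: assumes "C \<in> S" shows "finite C" "card C = card (fst (dec \<B> \<B>' C)) + card (snd (dec \<B> \<B>' C))"
proof -
  have d: "fst (dec \<B> \<B>' C) \<in> \<B>" "snd (dec \<B> \<B>' C) \<in> \<B>'" "fst (dec \<B> \<B>' C) \<inter> snd (dec \<B> \<B>' C) = {}"
     "C = fst (dec \<B> \<B>' C) \<union> snd (dec \<B> \<B>' C)" using dec[OF assms] by auto
  have "finite (fst (dec \<B> \<B>' C))" "finite (snd (dec \<B> \<B>' C))" using d M.finB M'.finB by auto
  then show "finite C" using d(4) by (metis finite_Un)
  show "card C = card (fst (dec \<B> \<B>' C)) + card (snd (dec \<B> \<B>' C))"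
  proof -
    have "card (fst (dec \<B> \<B>' C) \<union> snd (dec \<B> \<B>' C)) = card (fst (dec \<B> \<B>' C)) + card (snd (dec \<B> \<B>' C))"
      using d(3) \<open>finite (fst (dec \<B> \<B>' C))\<close> \<open>finite (snd (dec \<B> \<B>' C))\<close> by (rule card_Un_disjoint[rotated 2])
    then show ?thesis using d(4) by simp
  qed
qed

lemma bdS: assumes "C1 \<in> S" "C2 \<in> S" shows "basis_dist C1 C2 = 2 * card (C1 - C2)"
proof -
  have "card (fst (dec \<B> \<B>' C1)) = card (fst (dec \<B> \<B>' C2))"
    using dec[OF assms(1)] dec[OF assms(2)] M.card_eq by blast
  moreover have "card (snd (dec \<B> \<B>' C1)) = card (snd (dec \<B> \<B>' C2))"
    using dec[OF assms(1)] dec[OF assms(2)] M'.card_eq by blast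
  ultimately have "card C1 = card C2" using S_card(2)[OF assms(1)] S_card(2)[OF assms(2)] by simp
  then show ?thesis using basis_dist_eq S_card assms by blast
qed

lemma upper:
  assumes "B1 \<in> \<B>" "B2 \<in> \<B>" "B1' \<in> \<B>'" "B2' \<in> \<B>'" "B1 \<inter> B1' = {}" "B2 \<inter> B2' = {}"
  shows "basis_dist (B1 \<union> B1') (B2 \<union> B2') \<le> basis_dist B1 B2 + basis_dist B1' B2'"
proof -
  have "(B1 \<union> B1') - (B2 \<union> B2') \<subseteq> (B1 - B2) \<union> (B1' - B2')" by blast
  then have "card ((B1 \<union> B1') - (B2 \<union> B2')) \<le> card ((B1 - B2) \<union> (B1' - B2'))"
    using assms M.finB M'.finB by (intro card_mono) auto
  also have "\<dots> \<le> card (B1 - B2) + card (B1' - B2')" by (rule card_Un_le)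
  finally show ?thesis using bdS[OF memS[OF assms(1,3,5)] memS[OF assms(2,4,6)]] M.bd[OF assms(1,2)]
      M'.bd[OF assms(3,4)] by simp
qed

lemma lower_a:
  assumes "B1 \<in> \<B>" "B2 \<in> \<B>" "B1' \<in> \<B>'" "B2' \<in> \<B>'" "p \<notin> B1" "p \<notin> B2"
  shows "B1 \<union> B1' \<in> S" "B2 \<union> B2' \<in> S"
    "basis_dist B1 B2 + basis_dist B1' B2' \<le> basis_dist (B1 \<union> B1') (B2 \<union> B2')"
proof -
  have d1: "B1 \<inter> B1' = {}" and d2: "B2 \<inter> B2' = {}" using disj_of assms by auto
  show m1: "B1 \<union> B1' \<in> S" and m2: "B2 \<union> B2' \<in> S" using memS assms d1 d2 by auto
  have s1: "B1 \<subseteq> E" "B2 \<subseteq> E" "B1' \<subseteq> E'" "B2' \<subseteq> E'" using assms M.sub M'.sub by auto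
  have "(B1 - B2) \<union> (B1' - B2') \<subseteq> (B1 \<union> B1') - (B2 \<union> B2')" using s1 pEE assms(5,6) by blast
  then have "card ((B1 - B2) \<union> (B1' - B2')) \<le> card ((B1 \<union> B1') - (B2 \<union> B2'))"
    using S_card(1)[OF m1] by (intro card_mono) auto
  moreover have "card ((B1 - B2) \<union> (B1' - B2')) = card (B1 - B2) + card (B1' - B2')"
    using assms M.finB M'.finB d1 by (intro card_Un_disjoint) auto
  ultimately show "basis_dist B1 B2 + basis_dist B1' B2' \<le> basis_dist (B1 \<union> B1') (B2 \<union> B2')"
    using bdS[OF m1 m2] M.bd[OF assms(1,2)] M'.bd[OF assms(3,4)] by simp
qed

lemma lower_b:
  assumes "B1 \<in> \<B>" "B2 \<in> \<B>" "B1' \<in> \<B>'" "B2' \<in> \<B>'" "p \<in> B1" "p \<notin> B2" "p \<notin> B1'" "p \<in> B2'"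
  shows "B1 \<union> B1' \<in> S" "B2 \<union> B2' \<in> S"
    "basis_dist B1 B2 + basis_dist B1' B2' \<le> basis_dist (B1 \<union> B1') (B2 \<union> B2') + 2"
proof -
  have d1: "B1 \<inter> B1' = {}" and d2: "B2 \<inter> B2' = {}" using disj_of assms by auto
  show m1: "B1 \<union> B1' \<in> S" and m2: "B2 \<union> B2' \<in> S" using memS assms d1 d2 by auto
  have s1: "B1 \<subseteq> E" "B2 \<subseteq> E" "B1' \<subseteq> E'" "B2' \<subseteq> E'" using assms M.sub M'.sub by auto
  have "(B1 - B2 - {p}) \<union> (B1' - B2') \<subseteq> (B1 \<union> B1') - (B2 \<union> B2')" using s1 pEE assms(5-8) by blast
  then have "card ((B1 - B2 - {p}) \<union> (B1' - B2')) \<le> card ((B1 \<union> B1') - (B2 \<union> B2'))"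
    using S_card(1)[OF m1] by (intro card_mono) auto
  moreover have "card ((B1 - B2 - {p}) \<union> (B1' - B2')) = card (B1 - B2 - {p}) + card (B1' - B2')"
    using assms M.finB M'.finB d1 by (intro card_Un_disjoint) auto
  moreover have "card (B1 - B2 - {p}) + 1 = card (B1 - B2)"
  proof -
    have "finite (B1 - B2)" "p \<in> B1 - B2" using M.finB assms by auto
    then have "card (B1 - B2) > 0" using card_gt_0_iff by blast
    then show ?thesis using card_Diff_singleton[OF \<open>p \<in> B1 - B2\<close>] by simp
  qed
  ultimately show "basis_dist B1 B2 + basis_dist B1' B2' \<le> basis_dist (B1 \<union> B1') (B2 \<union> B2') + 2"
    using bdS[OF m1 m2] M.bd[OF assms(1,2)] M'.bd[OF assms(3,4)] by simp
qed


lemma diamA: assumes "avoid \<B> p" shows "diam \<B> + diam \<B>' \<le> diam S"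
proof -
  obtain B1 B2 where B: "B1 \<in> \<B>" "B2 \<in> \<B>" "p \<notin> B1" "p \<notin> B2" "basis_dist B1 B2 = diam \<B>"
    using assms unfolding avoid_def by blast
  obtain B1' B2' where B': "B1' \<in> \<B>'" "B2' \<in> \<B>'" "basis_dist B1' B2' = diam \<B>'"
    using diam_ex[OF M'.fin M'.ne] by blast
  note l = lower_a[OF B(1,2) B'(1,2) B(3,4)]
  have "basis_dist (B1 \<union> B1') (B2 \<union> B2') \<le> diam S" using diam_ge[OF S_fin l(1,2)] .
  then show ?thesis using l(3) B(5) B'(3) by simp
qed

lemma borsukA: assumes "diam \<B> + diam \<B>' \<le> diam S" shows "borsuk S \<le> borsuk \<B>"
proof (cases "borsuk \<B> = \<infinity>")
  case True then show ?thesis by simp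
next
  case False
  then obtain P where P: "borsuk_partition \<B> P" "borsuk \<B> = enat (card P)" using borsuk_obtain by blast
  define g where "g C = fst (dec \<B> \<B>' C)" for C
  define Q where "Q = (\<lambda>X. {C\<in>S. g C \<in> X}) ` P - {{}}"
  have P1: "finite P" "\<forall>X\<in>P. \<forall>Y\<in>P. X \<noteq> Y \<longrightarrow> X \<inter> Y = {}" "\<Union>P = \<B>" "\<forall>X\<in>P. diam X < diam \<B>"
    using P(1) unfolding borsuk_partition_def by auto
  have P2: "\<forall>C\<in>S. g C \<in> \<Union>P" using P1(3) dec unfolding g_def by blast
  note cp = class_part[OF P1(1,2) P2 Q_def]
  have "\<forall>X\<in>Q. \<forall>A\<in>X. \<forall>B\<in>X. basis_dist A B < diam S"
  proof (intro ballI)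
    fix Z A B assume Z: "Z \<in> Q" and A: "A \<in> Z" and B: "B \<in> Z"
    then obtain X where X: "X \<in> P" "A \<in> S" "g A \<in> X" "B \<in> S" "g B \<in> X" using cp(6) by blast
    have dA: "g A \<in> \<B>" "snd (dec \<B> \<B>' A) \<in> \<B>'" "g A \<inter> snd (dec \<B> \<B>' A) = {}"
      "A = g A \<union> snd (dec \<B> \<B>' A)" using dec[OF X(2)] unfolding g_def by auto
    have dB: "g B \<in> \<B>" "snd (dec \<B> \<B>' B) \<in> \<B>'" "g B \<inter> snd (dec \<B> \<B>' B) = {}"
      "B = g B \<union> snd (dec \<B> \<B>' B)" using dec[OF X(4)] unfolding g_def by auto
    have "X \<subseteq> \<B>" using X(1) P1(3) by blast
    then have "finite X" using M.fin finite_subset by blast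
    then have "basis_dist (g A) (g B) \<le> diam X" using diam_ge X by blast
    then have 1: "basis_dist (g A) (g B) < diam \<B>" using P1(4) X(1) by fastforce
    have 2: "basis_dist (snd (dec \<B> \<B>' A)) (snd (dec \<B> \<B>' B)) \<le> diam \<B>'" using M'.dge dA dB by blast
    have "basis_dist A B \<le> basis_dist (g A) (g B) + basis_dist (snd (dec \<B> \<B>' A)) (snd (dec \<B> \<B>' B))"
      using upper[OF dA(1) dB(1) dA(2) dB(2) dA(3) dB(3)] dA(4) dB(4) by simp
    then show "basis_dist A B < diam S" using 1 2 assms by linarith
  qed
  then have "borsuk S \<le> enat (card Q)" using borsuk_le[OF S_fin cp(1-4)] by blast
  also have "\<dots> \<le> enat (card P)" using cp(5) by simp
  finally show ?thesis using P(2) by simp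
qed

lemma diamB: assumes "\<not> avoid \<B> p" "\<not> avoid \<B>' p" shows "diam \<B> + diam \<B>' \<le> diam S + 2"
proof -
  obtain B1 B2 where B: "B1 \<in> \<B>" "B2 \<in> \<B>" "basis_dist B1 B2 = diam \<B>" "p \<notin> B2"
    using M.exists_diam_avoid[OF ncM] by blast
  then have "p \<in> B1" using assms(1) unfolding avoid_def by blast
  obtain X Y where XY: "X \<in> \<B>'" "Y \<in> \<B>'" "basis_dist X Y = diam \<B>'" "p \<notin> Y"
    using M'.exists_diam_avoid[OF ncM'] by blast
  then have "p \<in> X" using assms(2) unfolding avoid_def by blast
  note l = lower_b[OF B(1,2) XY(2,1) \<open>p \<in> B1\<close> B(4) XY(4) \<open>p \<in> X\<close>]
  have "basis_dist (B1 \<union> Y) (B2 \<union> X) \<le> diam S" using diam_ge[OF S_fin l(1,2)] .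
  then show ?thesis using l(3) B(3) XY(3) basis_dist_sym[of X Y] by simp
qed

lemma borsukB: assumes "\<not> avoid \<B> p" "\<not> avoid \<B>' p"
  and P: "borsuk_partition \<B> P" and P': "borsuk_partition \<B>' P'"
  shows "borsuk S \<le> enat (card P + card P')"
proof -
  define g where "g C = fst (dec \<B> \<B>' C)" for C
  define g' where "g' C = snd (dec \<B> \<B>' C)" for C
  define T1 where "T1 = {C\<in>S. p \<in> g C}"
  define T2 where "T2 = {C\<in>S. p \<notin> g C}"
  define Q1 where "Q1 = (\<lambda>X. {C\<in>T1. g C \<in> X}) ` P - {{}}"
  define Q2 where "Q2 = (\<lambda>X. {C\<in>T2. g' C \<in> X}) ` P' - {{}}"
  have P1: "finite P" "\<forall>X\<in>P. \<forall>Y\<in>P. X \<noteq> Y \<longrightarrow> X \<inter> Y = {}" "\<Union>P = \<B>" "\<forall>X\<in>P. diam X < diam \<B>"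
    using P unfolding borsuk_partition_def by auto
  have P1': "finite P'" "\<forall>X\<in>P'. \<forall>Y\<in>P'. X \<noteq> Y \<longrightarrow> X \<inter> Y = {}" "\<Union>P' = \<B>'" "\<forall>X\<in>P'. diam X < diam \<B>'"
    using P' unfolding borsuk_partition_def by auto
  have dd: "g C \<in> \<B> \<and> g' C \<in> \<B>' \<and> g C \<inter> g' C = {} \<and> C = g C \<union> g' C" if "C \<in> S" for C
    using dec[OF that] unfolding g_def g'_def by blast
  have P2: "\<forall>C\<in>T1. g C \<in> \<Union>P" using P1(3) dd unfolding T1_def by blast
  have P2': "\<forall>C\<in>T2. g' C \<in> \<Union>P'" using P1'(3) dd unfolding T2_def by blast
  note cp = class_part[OF P1(1,2) P2 Q1_def]
  note cp' = class_part[OF P1'(1,2) P2' Q2_def]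
  define Q where "Q = Q1 \<union> Q2"
  have ev: "basis_dist U V + 2 \<le> D" if "basis_dist U V < D" "\<exists>k. basis_dist U V = 2 * k" "\<exists>k. D = 2 * k"
    for U V :: "'a set" and D :: nat using that by auto
  obtain k where k: "diam \<B> = 2 * k" using M.diam_even by blast
  obtain k' where k': "diam \<B>' = 2 * k'" using M'.diam_even by blast
  have DS: "diam \<B> + diam \<B>' \<le> diam S + 2" using diamB[OF assms(1,2)] .
  have key: "basis_dist A B < diam S" if "A \<in> S" "B \<in> S" "basis_dist (g A) (g B) < diam \<B>"
    "basis_dist (g' A) (g' B) < diam \<B>'" for A B
  proof -
    have dA: "g A \<in> \<B>" "g' A \<in> \<B>'" "g A \<inter> g' A = {}" "A = g A \<union> g' A" using dd[OF that(1)] by auto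
    have dB: "g B \<in> \<B>" "g' B \<in> \<B>'" "g B \<inter> g' B = {}" "B = g B \<union> g' B" using dd[OF that(2)] by auto
    have "basis_dist (g A) (g B) + 2 \<le> diam \<B>" using ev[OF that(3)] M.bd[OF dA(1) dB(1)] k by blast
    moreover have "basis_dist (g' A) (g' B) + 2 \<le> diam \<B>'" using ev[OF that(4)] M'.bd[OF dA(2) dB(2)] k' by blast
    moreover have "basis_dist A B \<le> basis_dist (g A) (g B) + basis_dist (g' A) (g' B)"
      using upper[OF dA(1) dB(1) dA(2) dB(2) dA(3) dB(3)] dA(4) dB(4) by simp
    ultimately show ?thesis using DS by linarith
  qed
  have nav: "basis_dist U V < diam \<B>" if "U \<in> \<B>" "V \<in> \<B>" "p \<notin> U" "p \<notin> V" for U V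
    using assms(1) that M.dge[OF that(1,2)] unfolding avoid_def by fastforce
  have nav': "basis_dist U V < diam \<B>'" if "U \<in> \<B>'" "V \<in> \<B>'" "p \<notin> U" "p \<notin> V" for U V
    using assms(2) that M'.dge[OF that(1,2)] unfolding avoid_def by fastforce
  have cls: "basis_dist U V < diam \<A>" if "X \<in> PP" "U \<in> X" "V \<in> X" "\<Union>PP = \<A>" "finite \<A>"
    "\<forall>X\<in>PP. diam X < diam \<A>" for U V X PP and \<A> :: "'a set set"
  proof -
    have "X \<subseteq> \<A>" using that by blast
    then have "finite X" using that(5) finite_subset by blast
    then have "basis_dist U V \<le> diam X" using diam_ge that by blast
    then show ?thesis using that(1,6) by fastforce
  qed
  have "\<forall>X\<in>Q. \<forall>A\<in>X. \<forall>B\<in>X. basis_dist A B < diam S"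
  proof (intro ballI)
    fix Z A B assume Z: "Z \<in> Q" and A: "A \<in> Z" and B: "B \<in> Z"
    show "basis_dist A B < diam S"
    proof (cases "Z \<in> Q1")
      case True
      then obtain X where X: "X \<in> P" "A \<in> T1" "g A \<in> X" "B \<in> T1" "g B \<in> X" using cp(6) A B by blast
      have AS: "A \<in> S" "B \<in> S" "p \<in> g A" "p \<in> g B" using X unfolding T1_def by auto
      have "p \<notin> g' A" "p \<notin> g' B" using dd[OF AS(1)] dd[OF AS(2)] AS(3,4) by blast+
      then have 2: "basis_dist (g' A) (g' B) < diam \<B>'" using nav' dd AS by blast
      have 1: "basis_dist (g A) (g B) < diam \<B>" using cls[OF X(1) X(3) X(5) P1(3) M.fin P1(4)] .
      show ?thesis using key[OF AS(1,2) 1 2] .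
    next
      case False
      then have "Z \<in> Q2" using Z unfolding Q_def by blast
      then obtain X where X: "X \<in> P'" "A \<in> T2" "g' A \<in> X" "B \<in> T2" "g' B \<in> X" using cp'(6) A B by blast
      have AS: "A \<in> S" "B \<in> S" "p \<notin> g A" "p \<notin> g B" using X unfolding T2_def by auto
      then have 1: "basis_dist (g A) (g B) < diam \<B>" using nav dd AS by blast
      have 2: "basis_dist (g' A) (g' B) < diam \<B>'" using cls[OF X(1) X(3) X(5) P1'(3) M'.fin P1'(4)] .
      show ?thesis using key[OF AS(1,2) 1 2] .
    qed
  qed
  moreover have "finite Q" using cp(1) cp'(1) unfolding Q_def by blast
  moreover have "\<Union>Q = S"
  proof -
    have "\<Union>Q = \<Union>Q1 \<union> \<Union>Q2" unfolding Q_def by (rule Union_Un_distrib)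
    also have "\<dots> = T1 \<union> T2" using cp(2) cp'(2) by simp
    also have "\<dots> = S" unfolding T1_def T2_def by blast
    finally show ?thesis .
  qed
  moreover have "{} \<notin> Q" using cp(3) cp'(3) unfolding Q_def by blast
  moreover have "\<forall>X\<in>Q. \<forall>Y\<in>Q. X \<noteq> Y \<longrightarrow> X \<inter> Y = {}"
  proof (intro ballI impI)
    fix X Y assume XY: "X \<in> Q" "Y \<in> Q" "X \<noteq> Y"
    have s1: "Z \<subseteq> T1" if "Z \<in> Q1" for Z using cp(2) that by blast
    have s2: "Z \<subseteq> T2" if "Z \<in> Q2" for Z using cp'(2) that by blast
    have "T1 \<inter> T2 = {}" unfolding T1_def T2_def by blast
    have XY': "X \<in> Q1 \<or> X \<in> Q2" "Y \<in> Q1 \<or> Y \<in> Q2" using XY(1,2) unfolding Q_def by auto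
    show "X \<inter> Y = {}"
    proof (cases "X \<in> Q1")
      case True
      show ?thesis
      proof (cases "Y \<in> Q1")
        case True
        then show ?thesis using \<open>X \<in> Q1\<close> XY(3) cp(4) by blast
      next
        case False
        then have "Y \<subseteq> T2" using XY' s2 by blast
        moreover have "X \<subseteq> T1" using \<open>X \<in> Q1\<close> s1 by blast
        ultimately show ?thesis using \<open>T1 \<inter> T2 = {}\<close> by blast
      qed
    next
      case False
      then have "X \<in> Q2" using XY' by blast
      show ?thesis
      proof (cases "Y \<in> Q2")
        case True
        then show ?thesis using \<open>X \<in> Q2\<close> XY(3) cp'(4) by blast
      next
        case False
        then have "Y \<subseteq> T1" using XY' s1 by blast
        moreover have "X \<subseteq> T2" using \<open>X \<in> Q2\<close> s2 by blast
        ultimately show ?thesis using \<open>T1 \<inter> T2 = {}\<close> by blast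
      qed
    qed
  qed
  ultimately have "borsuk S \<le> enat (card Q)" by (intro borsuk_le[OF S_fin]) auto
  also have "card Q \<le> card P + card P'"
  proof -
    have "card Q \<le> card Q1 + card Q2" unfolding Q_def by (rule card_Un_le)
    then show ?thesis using cp(5) cp'(5) by linarith
  qed
  finally show ?thesis by simp
qed
end


lemma avoid_of_disj:
  assumes "matroid_bases E \<B>" "B1 \<in> \<B>" "B2 \<in> \<B>" "B1 \<inter> B2 = {}" "p \<notin> B1" "p \<notin> B2"
  shows "avoid \<B> p"
proof -
  interpret M: matroid E \<B> using assms(1) by unfold_locales
  obtain U V where UV: "U \<in> \<B>" "V \<in> \<B>" "basis_dist U V = diam \<B>" using diam_ex[OF M.fin M.ne] by blast
  have "card (U - V) \<le> card U" using M.finB[OF UV(1)] by (intro card_mono) auto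
  also have "\<dots> = card B1" using M.card_eq UV(1) assms(2) by blast
  also have "\<dots> = card (B1 - B2)" using assms(4) by (simp add: Diff_triv)
  finally have "diam \<B> \<le> basis_dist B1 B2" using UV M.bd[OF UV(1,2)] M.bd[OF assms(2,3)] by simp
  then have "basis_dist B1 B2 = diam \<B>" using M.dge[OF assms(2,3)] by simp
  then show ?thesis unfolding avoid_def using assms by blast
qed

theorem proposition4p4:
  fixes E E' :: "'a set" and \<B> \<B>' :: "'a set set" and p :: 'a
  assumes "matroid_bases E \<B>" and "matroid_bases E' \<B>'"
    and "E \<inter> E' = {p}"
    and "\<not> coloop \<B> p" and "\<not> coloop \<B>' p"
  shows "borsuk (ser_bases \<B> \<B>') \<le> borsuk \<B> + borsuk \<B>'
    \<and> ((\<exists>B1\<in>\<B>. \<exists>B2\<in>\<B>. B1 \<inter> B2 = {} \<and> p \<notin> B1 \<and> p \<notin> B2)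
         \<longrightarrow> borsuk (ser_bases \<B> \<B>') \<le> min (borsuk \<B>) (borsuk \<B>'))"
proof -
  interpret s1: ser E \<B> E' \<B>' p
    apply unfold_locales using assms by (auto simp: Int_commute)
  interpret s2: ser E' \<B>' E \<B> p
    apply unfold_locales using assms by (auto simp: Int_commute)
  have comm: "ser_bases \<B>' \<B> = ser_bases \<B> \<B>'" by (rule ser_comm)
  have c1: "borsuk (ser_bases \<B> \<B>') \<le> borsuk \<B> + borsuk \<B>'"
  proof (cases "avoid \<B> p")
    case True
    then have "borsuk (ser_bases \<B> \<B>') \<le> borsuk \<B>" using s1.borsukA s1.diamA by blast
    then show ?thesis by (rule add_increasing2[rotated]) simp
  next
    case F1: False
    show ?thesis
    proof (cases "avoid \<B>' p")
      case True
      then have "borsuk (ser_bases \<B>' \<B>) \<le> borsuk \<B>'" using s2.borsukA s2.diamA by blast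
      then have "borsuk (ser_bases \<B> \<B>') \<le> borsuk \<B>'" using comm by simp
      then show ?thesis by (rule add_increasing[rotated]) simp
    next
      case F2: False
      show ?thesis
      proof (cases "borsuk \<B> = \<infinity> \<or> borsuk \<B>' = \<infinity>")
        case True
        then show ?thesis by auto
      next
        case False
        then have n: "borsuk \<B> \<noteq> \<infinity>" "borsuk \<B>' \<noteq> \<infinity>" by auto
        obtain P where P: "borsuk_partition \<B> P" "borsuk \<B> = enat (card P)"
          using borsuk_obtain[OF n(1)] by blast
        obtain P' where P': "borsuk_partition \<B>' P'" "borsuk \<B>' = enat (card P')"
          using borsuk_obtain[OF n(2)] by blast
        have "borsuk (ser_bases \<B> \<B>') \<le> enat (card P + card P')" using s1.borsukB[OF F1 F2 P(1) P'(1)] .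
        then show ?thesis using P(2) P'(2) by simp
      qed
    qed
  qed
  have c2: "borsuk (ser_bases \<B> \<B>') \<le> min (borsuk \<B>) (borsuk \<B>')"
    if h: "\<exists>B1\<in>\<B>. \<exists>B2\<in>\<B>. B1 \<inter> B2 = {} \<and> p \<notin> B1 \<and> p \<notin> B2"
  proof -
    have av: "avoid \<B> p" using h avoid_of_disj[OF assms(1)] by blast
    have d: "diam \<B> + diam \<B>' \<le> diam (ser_bases \<B> \<B>')" using s1.diamA[OF av] .
    have "borsuk (ser_bases \<B> \<B>') \<le> borsuk \<B>" using s1.borsukA[OF d] .
    moreover have "diam \<B>' + diam \<B> \<le> diam (ser_bases \<B>' \<B>)" using d comm by simp
    then have "borsuk (ser_bases \<B>' \<B>) \<le> borsuk \<B>'" using s2.borsukA by blast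
    then have "borsuk (ser_bases \<B> \<B>') \<le> borsuk \<B>'" using comm by simp
    ultimately show ?thesis by simp
  qed
  show ?thesis using c1 c2 by blast
qed

end
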